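(* Let $1<\alpha<\beta$ be real numbers and let $S_{\alpha,\beta}:=\{r\in\mathbb{Q}_{>0}: r\in(\beta^{-1},\alpha^{-1})\cup(\alpha,\beta)\}$. Then $$\chi(G(S_{\alpha,\beta}))\le \left\lceil \frac{\log\alpha\beta}{\log\alpha}\right\rceil.$$
   Context: For $R\subseteq\mathbb{Q}_{>0}\setminus\{1\}$, $G(R)$ is the graph with vertex set $\mathbb{N}=\{1,2,\dots\}$ and edge set $\{\{m,n\}: m/n\in R\}$. $\chi$ denotes chromatic number. *)

theory Defs
  imports Complex_Main "HOL-Library.Extended_Nat"
begin

definition ratio_edge :: "rat set \<Rightarrow> nat \<Rightarrow> nat \<Rightarrow> bool" where
  "ratio_edge R m n \<longleftrightarrow> m \<ge> 1 \<and> n \<ge> 1 \<and> (of_nat m / of_nat n :: rat) \<in> R"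

definition ratio_colorable :: "rat set \<Rightarrow> nat \<Rightarrow> bool" where
  "ratio_colorable R k \<longleftrightarrow> (\<exists>c :: nat \<Rightarrow> nat.
      (\<forall>n\<ge>1. c n < k) \<and>
      (\<forall>m n. ratio_edge R m n \<or> ratio_edge R n m \<longrightarrow> c m \<noteq> c n))"

definition ratio_chi :: "rat set \<Rightarrow> enat" where
  "ratio_chi R = Inf {enat k | k. ratio_colorable R k}"

definition S_ab :: "real \<Rightarrow> real \<Rightarrow> rat set" where
  "S_ab \<alpha> \<beta> = {r. r > 0 \<and> ((1/\<beta> < of_rat r \<and> of_rat r < 1/\<alpha>) \<or> (\<alpha> < of_rat r \<and> of_rat r < \<beta>))}"

end

theory Submission
  imports Defs
begin

lemma floor_gap:
  fixes x y L :: real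
  assumes "1 < x - y" "x - y < L"
  shows "1 \<le> \<lfloor>x\<rfloor> - \<lfloor>y\<rfloor>" "\<lfloor>x\<rfloor> - \<lfloor>y\<rfloor> \<le> \<lceil>1 + L\<rceil> - 1"
proof -
  have "\<lfloor>y\<rfloor> + 1 \<le> \<lfloor>x\<rfloor>" using assms(1) by linarith
  thus "1 \<le> \<lfloor>x\<rfloor> - \<lfloor>y\<rfloor>" by simp
  have "real_of_int (\<lfloor>x\<rfloor> - \<lfloor>y\<rfloor>) < L + 1" using assms(2) by linarith
  moreover have "L + 1 \<le> real_of_int \<lceil>1 + L\<rceil>" by linarith
  ultimately show "\<lfloor>x\<rfloor> - \<lfloor>y\<rfloor> \<le> \<lceil>1 + L\<rceil> - 1" by linarith
qed

lemma key:
  fixes a b :: real and m n :: nat and K :: int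
  assumes a: "1 < a" and ab: "a < b" and m: "m \<ge> 1" and n: "n \<ge> 1"
    and r: "a < real m / real n" "real m / real n < b"
    and K: "K = \<lceil>1 + ln b / ln a\<rceil>"
  shows "1 \<le> \<lfloor>ln (real m) / ln a\<rfloor> - \<lfloor>ln (real n) / ln a\<rfloor>"
        "\<lfloor>ln (real m) / ln a\<rfloor> - \<lfloor>ln (real n) / ln a\<rfloor> \<le> K - 1"
proof -
  have la: "ln a > 0" using a by simp
  have "ln (real m / real n) = ln (real m) - ln (real n)" using m n by (simp add: ln_div)
  moreover have "ln a < ln (real m / real n)" using r a by simp
  moreover have "ln (real m / real n) < ln b" using r a by (smt (verit) ln_less_cancel_iff)
  ultimately have h1: "ln a < ln (real m) - ln (real n)" and h2: "ln (real m) - ln (real n) < ln b" by auto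
  have "1 < ln (real m)/ln a - ln (real n)/ln a"
    using h1 la by (simp add: diff_divide_distrib[symmetric] less_divide_eq)
  moreover have "ln (real m)/ln a - ln (real n)/ln a < ln b / ln a"
    using h2 la by (simp add: diff_divide_distrib[symmetric] divide_strict_right_mono)
  ultimately show "1 \<le> \<lfloor>ln (real m) / ln a\<rfloor> - \<lfloor>ln (real n) / ln a\<rfloor>"
        "\<lfloor>ln (real m) / ln a\<rfloor> - \<lfloor>ln (real n) / ln a\<rfloor> \<le> K - 1"
    using floor_gap K by blast+
qed

theorem proposition2p2:
  fixes \<alpha> \<beta> :: real
  assumes "1 < \<alpha>" and "\<alpha> < \<beta>"
  shows "ratio_chi (S_ab \<alpha> \<beta>) \<le> enat (nat \<lceil>ln (\<alpha> * \<beta>) / ln \<alpha>\<rceil>)"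
proof -
  define K where "K = \<lceil>1 + ln \<beta> / ln \<alpha>\<rceil>"
  have la: "ln \<alpha> > 0" using assms by simp
  have lb: "ln \<beta> > 0" using assms by simp
  have eq: "ln (\<alpha> * \<beta>) / ln \<alpha> = 1 + ln \<beta> / ln \<alpha>"
    using assms la by (simp add: ln_mult add_divide_distrib)
  have K2: "K \<ge> 2"
  proof -
    have "ln \<beta> / ln \<alpha> > 0" using la lb by simp
    thus ?thesis unfolding K_def by linarith
  qed
  define f where "f = (\<lambda>n::nat. \<lfloor>ln (real n) / ln \<alpha>\<rfloor>)"
  define c where "c = (\<lambda>n. nat (f n mod K))"
  have edge: "c m \<noteq> c n" if m: "m \<ge> 1" and n: "n \<ge> 1"
    and r: "\<alpha> < real m / real n" "real m / real n < \<beta>" for m n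
  proof
    assume "c m = c n"
    moreover have "f m mod K \<ge> 0" "f n mod K \<ge> 0" using K2 by auto
    ultimately have "f m mod K = f n mod K" unfolding c_def by (metis nat_eq_iff2)
    hence "K dvd (f m - f n)" by (simp add: mod_eq_dvd_iff)
    moreover have "1 \<le> f m - f n" "f m - f n \<le> K - 1"
      using key[OF assms m n r K_def] unfolding f_def by auto
    ultimately show False using zdvd_imp_le by fastforce
  qed
  have sym: "c m \<noteq> c n" if "ratio_edge (S_ab \<alpha> \<beta>) m n" for m n
  proof -
    from that have m: "m \<ge> 1" and n: "n \<ge> 1" and
      s: "(1/\<beta> < real_of_rat (of_nat m / of_nat n) \<and> real_of_rat (of_nat m / of_nat n) < 1/\<alpha>) \<or>
          (\<alpha> < real_of_rat (of_nat m / of_nat n) \<and> real_of_rat (of_nat m / of_nat n) < \<beta>)"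
      unfolding ratio_edge_def S_ab_def by auto
    have q: "real_of_rat (of_nat m / of_nat n) = real m / real n" by (simp add: of_rat_divide)
    have pos: "real m / real n > 0" using m n by simp
    show ?thesis
    proof (cases "\<alpha> < real m / real n \<and> real m / real n < \<beta>")
      case True thus ?thesis using edge m n by blast
    next
      case False
      hence "1/\<beta> < real m / real n" "real m / real n < 1/\<alpha>" using s q by auto
      hence a1: "1/\<beta> < real m / real n" and a2: "real m / real n < 1/\<alpha>" by auto
      have "real n / real m = 1 / (real m / real n)" by simp
      moreover have "\<alpha> < 1 / (real m / real n)"
        using a2 pos assms m n by (simp add: less_divide_eq divide_less_eq mult.commute)
      moreover have "1 / (real m / real n) < \<beta>"
        using a1 pos assms m n by (simp add: less_divide_eq divide_less_eq mult.commute)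
      ultimately have "\<alpha> < real n / real m" "real n / real m < \<beta>" by auto
      thus ?thesis using edge[OF n m] by auto
    qed
  qed
  have "ratio_colorable (S_ab \<alpha> \<beta>) (nat K)"
    unfolding ratio_colorable_def
  proof (intro exI[of _ c] conjI allI impI)
    fix n :: nat show "c n < nat K" unfolding c_def using K2
      by (simp add: nat_less_eq_zless)
  next
    fix m n assume "ratio_edge (S_ab \<alpha> \<beta>) m n \<or> ratio_edge (S_ab \<alpha> \<beta>) n m"
    thus "c m \<noteq> c n" using sym by metis
  qed
  hence "ratio_chi (S_ab \<alpha> \<beta>) \<le> enat (nat K)"
    unfolding ratio_chi_def by (auto intro: Inf_lower)
  thus ?thesis using eq K_def by simp
qed

end
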